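(* For every pure state $\ket\Psi\in\mathcal H_A\otimes\mathcal H_B\otimes\mathcal H_C$ (finite-dimensional) and every integer $n\ge2$, $Z_n(A:B:C)_{\ket\Psi}$ is a real number with $|Z_n(A:B:C)_{\ket\Psi}|\le1$, and $Z_n(A:B:C)_{\ket\Psi}$ is invariant under permuting the roles of the subsystems $A,B,C$ (e.g. $Z_n(A:B:C)=Z_n(B:A:C)=Z_n(C:B:A)$).
   Context: For a subsystem $X$ and $\pi\in S_N$, $\pi_X$ permutes the $N$ copies of $\mathcal H_X$ according to $\pi$ and acts trivially otherwise. For integer $n\ge2$, arrange $1,\dots,n^2$ in an $n\times n$ array row by row; $\pi^{(1)}\in S_{n^2}$ is the product of the $n$ cycles $(kn+1,\dots,kn+n)$, $k=0,\dots,n-1$ (cycling each row), and $\pi^{(2)}\in S_{n^2}$ is the product of the $n$ cycles $(j,n+j,\dots,(n-1)n+j)$, $j=1,\dots,n$ (cycling each column). $Z_n(A:B:C)_{\ket\Psi}=\bra\Psi^{\otimes n^2}(\pi^{(1)}_A\otimes\pi^{(2)}_B\otimes\mathrm{id}_C)\ket\Psi^{\otimes n^2}$; $Z_n(B:A:C)$ denotes the same expression with the roles of $A$ and $B$ exchanged, etc. *)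

theory Defs
  imports "HOL-Analysis.Analysis"
begin

text \<open>A (normalized) pure state on H_A (x) H_B (x) H_C, with finite-dimensional
  factors given by finite index types 'a, 'b, 'c (computational bases); the state is
  its vector of amplitudes.\<close>
definition pure_state :: "('a::finite \<times> 'b::finite \<times> 'c::finite \<Rightarrow> complex) \<Rightarrow> bool" where
  "pure_state psi \<longleftrightarrow> (\<Sum>x\<in>UNIV. (cmod (psi x))\<^sup>2) = 1"

text \<open>Copies are indexed by 0,...,N-1 (paper: 1,...,N). The operator
  pA_A (x) pB_B (x) pC_C sends copy k of each subsystem to copy p(k), i.e. it maps the
  basis vector with local labels x_k to the one with labels x_(p^-1(k)); hence
  (pi Phi)(x) = Phi(x o p) componentwise.  This gives
  < Psi^(x)N | pA_A (x) pB_B (x) pC_C | Psi^(x)N >.\<close>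
definition perm_expect ::
  "nat \<Rightarrow> ('a::finite \<times> 'b::finite \<times> 'c::finite \<Rightarrow> complex)
     \<Rightarrow> (nat \<Rightarrow> nat) \<Rightarrow> (nat \<Rightarrow> nat) \<Rightarrow> (nat \<Rightarrow> nat) \<Rightarrow> complex" where
  "perm_expect N psi pA pB pC =
     (\<Sum>x\<in>PiE {..<N} (\<lambda>_. UNIV).
        cnj (\<Prod>k<N. psi (x k)) *
        (\<Prod>k<N. psi (fst (x (pA k)), fst (snd (x (pB k))), snd (snd (x (pC k))))))"

text \<open>0-based version of the n x n array: position k*n+j (row k, column j).
  pi1 cycles each row (kn+j -> kn+(j+1 mod n)), pi2 cycles each column
  (kn+j -> ((k+1) mod n) n + j). Identity outside {0..<n^2} (irrelevant).\<close>
definition pi1 :: "nat \<Rightarrow> nat \<Rightarrow> nat" where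
  "pi1 n i = (if i < n^2 then (i div n) * n + (Suc (i mod n)) mod n else i)"

definition pi2 :: "nat \<Rightarrow> nat \<Rightarrow> nat" where
  "pi2 n i = (if i < n^2 then ((Suc (i div n)) mod n) * n + i mod n else i)"

text \<open>Z_n(X:Y:Z) puts pi1 on X, pi2 on Y, id on Z. Below we give the permutation
  acting on A, B, C respectively.\<close>
definition Z_ABC :: "nat \<Rightarrow> ('a::finite \<times> 'b::finite \<times> 'c::finite \<Rightarrow> complex) \<Rightarrow> complex" where
  "Z_ABC n psi = perm_expect (n^2) psi (pi1 n) (pi2 n) id"
definition Z_BAC :: "nat \<Rightarrow> ('a::finite \<times> 'b::finite \<times> 'c::finite \<Rightarrow> complex) \<Rightarrow> complex" where
  "Z_BAC n psi = perm_expect (n^2) psi (pi2 n) (pi1 n) id"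
definition Z_ACB :: "nat \<Rightarrow> ('a::finite \<times> 'b::finite \<times> 'c::finite \<Rightarrow> complex) \<Rightarrow> complex" where
  "Z_ACB n psi = perm_expect (n^2) psi (pi1 n) id (pi2 n)"
definition Z_CAB :: "nat \<Rightarrow> ('a::finite \<times> 'b::finite \<times> 'c::finite \<Rightarrow> complex) \<Rightarrow> complex" where
  "Z_CAB n psi = perm_expect (n^2) psi (pi2 n) id (pi1 n)"
definition Z_BCA :: "nat \<Rightarrow> ('a::finite \<times> 'b::finite \<times> 'c::finite \<Rightarrow> complex) \<Rightarrow> complex" where
  "Z_BCA n psi = perm_expect (n^2) psi id (pi1 n) (pi2 n)"
definition Z_CBA :: "nat \<Rightarrow> ('a::finite \<times> 'b::finite \<times> 'c::finite \<Rightarrow> complex) \<Rightarrow> complex" where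
  "Z_CBA n psi = perm_expect (n^2) psi id (pi2 n) (pi1 n)"

end

theory Submission
  imports Defs
begin


definition F :: "nat \<Rightarrow> ('a::finite \<times> 'b::finite \<times> 'c::finite \<Rightarrow> complex) \<Rightarrow> (nat\<Rightarrow>nat) \<Rightarrow> (nat\<Rightarrow>nat) \<Rightarrow> (nat\<Rightarrow>nat) \<Rightarrow> (nat \<Rightarrow> 'a \<times> 'b \<times> 'c) \<Rightarrow> complex" where
  "F N psi pA pB pC x = (\<Prod>k<N. psi (fst (x (pA k)), fst (snd (x (pB k))), snd (snd (x (pC k)))))"

definition G :: "nat \<Rightarrow> (nat\<Rightarrow>nat) \<Rightarrow> (nat\<Rightarrow>nat) \<Rightarrow> (nat\<Rightarrow>nat) \<Rightarrow> (nat \<Rightarrow> 'a \<times> 'b \<times> 'c) \<Rightarrow> (nat \<Rightarrow> 'a \<times> 'b \<times> 'c)" where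
  "G N qA qB qC x = (\<lambda>k. if k < N then (fst (x (qA k)), fst (snd (x (qB k))), snd (snd (x (qC k)))) else undefined)"

abbreviation "PP N \<equiv> PiE {..<N} (\<lambda>_. UNIV :: ('a::finite \<times> 'b::finite \<times> 'c::finite) set)"

lemma perm_F: "perm_expect N psi pA pB pC = (\<Sum>x\<in>PP N. cnj (F N psi id id id x) * F N psi pA pB pC x)"
  unfolding perm_expect_def F_def by simp

lemma F_G:
  assumes "\<And>k. k < N \<Longrightarrow> pA k < N" "\<And>k. k < N \<Longrightarrow> pB k < N" "\<And>k. k < N \<Longrightarrow> pC k < N"
  shows "F N psi pA pB pC (G N qA qB qC y) = F N psi (\<lambda>k. qA (pA k)) (\<lambda>k. qB (pB k)) (\<lambda>k. qC (pC k)) y"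
  unfolding F_def G_def by (rule prod.cong) (auto simp: assms)

lemma F_cong:
  assumes "\<And>k. k < N \<Longrightarrow> pA k = qA k" "\<And>k. k < N \<Longrightarrow> pB k = qB k" "\<And>k. k < N \<Longrightarrow> pC k = qC k"
  shows "F N psi pA pB pC y = F N psi qA qB qC y"
  unfolding F_def by (rule prod.cong) (auto simp: assms)

lemma F_reindex:
  assumes "bij_betw s {..<N} {..<N}"
  shows "F N psi (\<lambda>k. pA (s k)) (\<lambda>k. pB (s k)) (\<lambda>k. pC (s k)) y = F N psi pA pB pC y"
  unfolding F_def using prod.reindex_bij_betw[OF assms, of "\<lambda>k. psi (fst (y (pA k)), fst (snd (y (pB k))), snd (snd (y (pC k))))"]
  by simp

lemma G_in: "G N qA qB qC x \<in> PP N"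
  unfolding G_def by (simp add: PiE_iff extensional_def)

lemma G_G:
  assumes "\<And>k. k < N \<Longrightarrow> pA k < N" "\<And>k. k < N \<Longrightarrow> pB k < N" "\<And>k. k < N \<Longrightarrow> pC k < N"
  shows "G N pA pB pC (G N qA qB qC y) = G N (\<lambda>k. qA (pA k)) (\<lambda>k. qB (pB k)) (\<lambda>k. qC (pC k)) y"
  unfolding G_def using assms by auto

lemma G_id:
  assumes "y \<in> PP N" "\<And>k. k < N \<Longrightarrow> pA k = k" "\<And>k. k < N \<Longrightarrow> pB k = k" "\<And>k. k < N \<Longrightarrow> pC k = k"
  shows "G N pA pB pC y = y"
  using assms unfolding G_def by (auto simp: PiE_iff extensional_def)

lemma G_bij:
  assumes "bij_betw qA {..<N} {..<N}" "bij_betw qB {..<N} {..<N}" "bij_betw qC {..<N} {..<N}"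
  shows "bij_betw (G N qA qB qC) (PP N) (PP N)"
proof (rule bij_betw_byWitness[where f' = "G N (inv_into {..<N} qA) (inv_into {..<N} qB) (inv_into {..<N} qC)"])
  have m: "\<And>q k. bij_betw q {..<N} {..<N} \<Longrightarrow> k < N \<Longrightarrow> q k < N"
    by (meson bij_betwE lessThan_iff)
  have mi: "\<And>q k. bij_betw q {..<N} {..<N} \<Longrightarrow> k < N \<Longrightarrow> inv_into {..<N} q k < N"
    by (metis bij_betw_imp_surj_on inv_into_into lessThan_iff)
  have l: "\<And>q k. bij_betw q {..<N} {..<N} \<Longrightarrow> k < N \<Longrightarrow> inv_into {..<N} q (q k) = k"
    by (meson bij_betw_inv_into_left lessThan_iff)
  have r: "\<And>q k. bij_betw q {..<N} {..<N} \<Longrightarrow> k < N \<Longrightarrow> q (inv_into {..<N} q k) = k"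
    by (meson bij_betw_inv_into_right lessThan_iff)
  show "\<forall>a\<in>PP N. G N (inv_into {..<N} qA) (inv_into {..<N} qB) (inv_into {..<N} qC) (G N qA qB qC a) = a"
  proof
    fix a assume a: "a \<in> PP N"
    have "G N (inv_into {..<N} qA) (inv_into {..<N} qB) (inv_into {..<N} qC) (G N qA qB qC a)
       = G N (\<lambda>k. qA (inv_into {..<N} qA k)) (\<lambda>k. qB (inv_into {..<N} qB k)) (\<lambda>k. qC (inv_into {..<N} qC k)) a"
      by (rule G_G[OF mi[OF assms(1)] mi[OF assms(2)] mi[OF assms(3)]])
    also have "\<dots> = a"
      by (rule G_id[OF a r[OF assms(1)] r[OF assms(2)] r[OF assms(3)]])
    finally show "G N (inv_into {..<N} qA) (inv_into {..<N} qB) (inv_into {..<N} qC) (G N qA qB qC a) = a" .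
  qed
  show "\<forall>a\<in>PP N. G N qA qB qC (G N (inv_into {..<N} qA) (inv_into {..<N} qB) (inv_into {..<N} qC) a) = a"
  proof
    fix a assume a: "a \<in> PP N"
    have "G N qA qB qC (G N (inv_into {..<N} qA) (inv_into {..<N} qB) (inv_into {..<N} qC) a)
       = G N (\<lambda>k. inv_into {..<N} qA (qA k)) (\<lambda>k. inv_into {..<N} qB (qB k)) (\<lambda>k. inv_into {..<N} qC (qC k)) a"
      by (rule G_G[OF m[OF assms(1)] m[OF assms(2)] m[OF assms(3)]])
    also have "\<dots> = a"
      by (rule G_id[OF a l[OF assms(1)] l[OF assms(2)] l[OF assms(3)]])
    finally show "G N qA qB qC (G N (inv_into {..<N} qA) (inv_into {..<N} qB) (inv_into {..<N} qC) a) = a" .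
  qed
  show "G N qA qB qC ` PP N \<subseteq> PP N" by (rule image_subsetI, rule G_in)
  show "G N (inv_into {..<N} qA) (inv_into {..<N} qB) (inv_into {..<N} qC) ` PP N \<subseteq> PP N" by (rule image_subsetI, rule G_in)
qed


lemma bij_into: "bij_betw q {..<N} {..<N} \<Longrightarrow> k < N \<Longrightarrow> q k < (N::nat)"
  by (meson bij_betwE lessThan_iff)

lemma perm_left:
  assumes t: "bij_betw t {..<N} {..<N}"
    and pA: "\<And>k. k < N \<Longrightarrow> pA k < N" and pB: "\<And>k. k < N \<Longrightarrow> pB k < N" and pC: "\<And>k. k < N \<Longrightarrow> pC k < N"
  shows "perm_expect N psi (\<lambda>k. t (pA k)) (\<lambda>k. t (pB k)) (\<lambda>k. t (pC k)) = perm_expect N psi pA pB pC"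
proof -
  have "perm_expect N psi pA pB pC = (\<Sum>x\<in>PP N. cnj (F N psi id id id (G N t t t x)) * F N psi pA pB pC (G N t t t x))"
    unfolding perm_F by (rule sum.reindex_bij_betw[OF G_bij[OF t t t], symmetric])
  also have "\<dots> = (\<Sum>x\<in>PP N. cnj (F N psi id id id x) * F N psi (\<lambda>k. t (pA k)) (\<lambda>k. t (pB k)) (\<lambda>k. t (pC k)) x)"
  proof (rule sum.cong[OF refl])
    fix x
    have "F N psi id id id (G N t t t x) = F N psi t t t x" by (subst F_G) auto
    also have "\<dots> = F N psi id id id x" using F_reindex[OF t, where pA=id and pB=id and pC=id] by simp
    finally show "cnj (F N psi id id id (G N t t t x)) * F N psi pA pB pC (G N t t t x) =
      cnj (F N psi id id id x) * F N psi (\<lambda>k. t (pA k)) (\<lambda>k. t (pB k)) (\<lambda>k. t (pC k)) x"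
      by (subst F_G) (auto simp: pA pB pC)
  qed
  finally show ?thesis unfolding perm_F by simp
qed

lemma perm_right:
  assumes s: "bij_betw s {..<N} {..<N}"
  shows "perm_expect N psi (\<lambda>k. pA (s k)) (\<lambda>k. pB (s k)) (\<lambda>k. pC (s k)) = perm_expect N psi pA pB pC"
  unfolding perm_F F_reindex[OF s] ..

lemma perm_cong:
  assumes "\<And>k. k < N \<Longrightarrow> pA k = qA k" "\<And>k. k < N \<Longrightarrow> pB k = qB k" "\<And>k. k < N \<Longrightarrow> pC k = qC k"
  shows "perm_expect N psi pA pB pC = perm_expect N psi qA qB qC"
  unfolding perm_F by (rule sum.cong[OF refl]) (simp add: F_cong[of N pA qA pB qB pC qC, OF assms])

lemma perm_conj_general:
  assumes t: "bij_betw t {..<N} {..<N}" and s: "bij_betw s {..<N} {..<N}"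
    and pA: "\<And>k. k < N \<Longrightarrow> pA k < N" and pB: "\<And>k. k < N \<Longrightarrow> pB k < N" and pC: "\<And>k. k < N \<Longrightarrow> pC k < N"
    and qA: "\<And>k. k < N \<Longrightarrow> qA k = t (pA (s k))" and qB: "\<And>k. k < N \<Longrightarrow> qB k = t (pB (s k))"
    and qC: "\<And>k. k < N \<Longrightarrow> qC k = t (pC (s k))"
  shows "perm_expect N psi qA qB qC = perm_expect N psi pA pB pC"
proof -
  have "perm_expect N psi qA qB qC = perm_expect N psi (\<lambda>k. t (pA (s k))) (\<lambda>k. t (pB (s k))) (\<lambda>k. t (pC (s k)))"
    by (rule perm_cong) (auto simp: qA qB qC)
  also have "\<dots> = perm_expect N psi (\<lambda>k. t (pA k)) (\<lambda>k. t (pB k)) (\<lambda>k. t (pC k))"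
    by (rule perm_right[OF s, where pA="\<lambda>k. t (pA k)" and pB="\<lambda>k. t (pB k)" and pC="\<lambda>k. t (pC k)"])
  also have "\<dots> = perm_expect N psi pA pB pC" by (rule perm_left[OF t pA pB pC])
  finally show ?thesis .
qed

lemma perm_adj:
  assumes bA: "bij_betw qA {..<N} {..<N}" and bB: "bij_betw qB {..<N} {..<N}" and bC: "bij_betw qC {..<N} {..<N}"
    and pA: "\<And>k. k < N \<Longrightarrow> pA k < N" and pB: "\<And>k. k < N \<Longrightarrow> pB k < N" and pC: "\<And>k. k < N \<Longrightarrow> pC k < N"
    and iA: "\<And>k. k < N \<Longrightarrow> qA (pA k) = k" and iB: "\<And>k. k < N \<Longrightarrow> qB (pB k) = k"
    and iC: "\<And>k. k < N \<Longrightarrow> qC (pC k) = k"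
  shows "perm_expect N psi qA qB qC = cnj (perm_expect N psi pA pB pC)"
proof -
  have "perm_expect N psi pA pB pC = (\<Sum>x\<in>PP N. cnj (F N psi id id id (G N qA qB qC x)) * F N psi pA pB pC (G N qA qB qC x))"
    unfolding perm_F by (rule sum.reindex_bij_betw[OF G_bij[OF bA bB bC], symmetric])
  also have "\<dots> = (\<Sum>x\<in>PP N. cnj (F N psi qA qB qC x) * F N psi id id id x)"
  proof (rule sum.cong[OF refl])
    fix x
    have "F N psi id id id (G N qA qB qC x) = F N psi qA qB qC x" by (subst F_G) auto
    moreover have "F N psi pA pB pC (G N qA qB qC x) = F N psi id id id x"
      by (subst F_G) (auto simp: pA pB pC iA iB iC intro!: F_cong)
    ultimately show "cnj (F N psi id id id (G N qA qB qC x)) * F N psi pA pB pC (G N qA qB qC x) =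
      cnj (F N psi qA qB qC x) * F N psi id id id x" by simp
  qed
  also have "\<dots> = cnj (perm_expect N psi qA qB qC)"
    unfolding perm_F by (simp add: mult.commute)
  finally show ?thesis by simp
qed

lemma F_norm:
  assumes "pure_state psi"
  shows "(\<Sum>x\<in>PP N. (cmod (F N psi id id id x))\<^sup>2) = 1"
proof -
  have "(\<Sum>x\<in>PP N. (cmod (F N psi id id id x))\<^sup>2) = (\<Sum>x\<in>PP N. \<Prod>k<N. (cmod (psi (x k)))\<^sup>2)"
    unfolding F_def by (simp add: prod_norm[symmetric] prod_power_distrib)
  also have "\<dots> = (\<Prod>k<N. \<Sum>v\<in>UNIV. (cmod (psi v))\<^sup>2)"
    by (rule prod_sum_PiE[symmetric]) auto
  also have "\<dots> = 1" using assms unfolding pure_state_def by simp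
  finally show ?thesis .
qed

lemma perm_bound:
  assumes ps: "pure_state psi" and bA: "bij_betw pA {..<N} {..<N}" and bB: "bij_betw pB {..<N} {..<N}" and bC: "bij_betw pC {..<N} {..<N}"
  shows "cmod (perm_expect N psi pA pB pC) \<le> 1"
proof -
  have e: "F N psi pA pB pC x = F N psi id id id (G N pA pB pC x)" for x by (subst F_G) auto
  have n2: "(\<Sum>x\<in>PP N. (cmod (F N psi pA pB pC x))\<^sup>2) = 1"
    unfolding e using sum.reindex_bij_betw[OF G_bij[OF bA bB bC], of "\<lambda>y. (cmod (F N psi id id id y))\<^sup>2"] F_norm[OF ps]
    by simp
  have "cmod (perm_expect N psi pA pB pC) \<le> (\<Sum>x\<in>PP N. cmod (cnj (F N psi id id id x) * F N psi pA pB pC x))"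
    unfolding perm_F by (rule norm_sum)
  also have "\<dots> \<le> (\<Sum>x\<in>PP N. ((cmod (F N psi id id id x))\<^sup>2 + (cmod (F N psi pA pB pC x))\<^sup>2) / 2)"
  proof (rule sum_mono)
    fix x
    have "0 \<le> (cmod (F N psi id id id x) - cmod (F N psi pA pB pC x))\<^sup>2" by simp
    then show "cmod (cnj (F N psi id id id x) * F N psi pA pB pC x) \<le> ((cmod (F N psi id id id x))\<^sup>2 + (cmod (F N psi pA pB pC x))\<^sup>2) / 2"
      by (simp add: norm_mult power2_eq_square algebra_simps)
  qed
  also have "\<dots> = 1"
    using F_norm[OF ps, of N] n2 by (simp add: sum_divide_distrib[symmetric] sum.distrib)
  finally show ?thesis .
qed




definition E :: "nat \<Rightarrow> int \<Rightarrow> int \<Rightarrow> nat" where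
  "E n r c = nat (r mod int n) * n + nat (c mod int n)"

definition Aff :: "nat \<Rightarrow> int \<Rightarrow> int \<Rightarrow> int \<Rightarrow> int \<Rightarrow> int \<Rightarrow> int \<Rightarrow> nat \<Rightarrow> nat" where
  "Aff n a1 a2 a3 a4 b1 b2 i = E n (a1 * int (i div n) + a2 * int (i mod n) + b1) (a3 * int (i div n) + a4 * int (i mod n) + b2)"

lemma E_lt: assumes "n > 0" shows "E n r c < n^2"
proof -
  have a: "nat (r mod int n) < n" "nat (c mod int n) < n" using assms by (simp_all add: nat_less_iff)
  have "nat (r mod int n) * n + nat (c mod int n) < nat (r mod int n) * n + n" using a by simp
  also have "\<dots> = (nat (r mod int n) + 1) * n" by simp
  also have "\<dots> \<le> n * n" using a by (intro mult_right_mono) auto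
  finally show ?thesis unfolding E_def by (simp add: power2_eq_square)
qed

lemma E_div: assumes "n > 0" shows "int (E n r c div n) = r mod int n" "int (E n r c mod n) = c mod int n"
proof -
  have a: "nat (c mod int n) < n" using assms by (simp add: nat_less_iff)
  show "int (E n r c div n) = r mod int n" unfolding E_def using a assms by simp
  show "int (E n r c mod n) = c mod int n" unfolding E_def using a assms by simp
qed

lemma E_cong: "r mod int n = r' mod int n \<Longrightarrow> c mod int n = c' mod int n \<Longrightarrow> E n r c = E n r' c'"
  unfolding E_def by simp

lemma Aff_lt: "n > 0 \<Longrightarrow> Aff n a1 a2 a3 a4 b1 b2 i < n^2"
  unfolding Aff_def by (rule E_lt)

lemma mod_lin: "(a * (x mod m) + b * (y mod m) + c) mod m = (a * x + b * y + c) mod (m::int)"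
  by (rule mod_add_cong[OF mod_add_cong[OF mod_mult_right_eq mod_mult_right_eq] refl])

lemma Aff_E: "Aff n a1 a2 a3 a4 b1 b2 i = E n (a1 * int (i div n) + a2 * int (i mod n) + b1) (a3 * int (i div n) + a4 * int (i mod n) + b2)"
  by (simp only: Aff_def)

lemma Aff_comp:
  assumes "n > 0"
  shows "Aff n a1 a2 a3 a4 b1 b2 (Aff n c1 c2 c3 c4 d1 d2 i) =
    Aff n (a1*c1+a2*c3) (a1*c2+a2*c4) (a3*c1+a4*c3) (a3*c2+a4*c4) (a1*d1+a2*d2+b1) (a3*d1+a4*d2+b2) i"
proof -
  define r where "r = int (i div n)"
  define c where "c = int (i mod n)"
  define x where "x = c1 * r + c2 * c + d1"
  define y where "y = c3 * r + c4 * c + d2"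
  have 1: "Aff n c1 c2 c3 c4 d1 d2 i = E n x y" unfolding Aff_E x_def y_def r_def c_def by (rule refl)
  have 2: "Aff n a1 a2 a3 a4 b1 b2 (E n x y) =
     E n (a1 * (x mod int n) + a2 * (y mod int n) + b1) (a3 * (x mod int n) + a4 * (y mod int n) + b2)"
    unfolding Aff_E E_div[OF assms] by (rule refl)
  have 3: "E n (a1 * (x mod int n) + a2 * (y mod int n) + b1) (a3 * (x mod int n) + a4 * (y mod int n) + b2)
     = E n (a1 * x + a2 * y + b1) (a3 * x + a4 * y + b2)"
    by (rule E_cong) (rule mod_lin)+
  have 4: "a1 * x + a2 * y + b1 = (a1*c1+a2*c3) * r + (a1*c2+a2*c4) * c + (a1*d1+a2*d2+b1)"
    unfolding x_def y_def by (simp add: algebra_simps)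
  have 5: "a3 * x + a4 * y + b2 = (a3*c1+a4*c3) * r + (a3*c2+a4*c4) * c + (a3*d1+a4*d2+b2)"
    unfolding x_def y_def by (simp add: algebra_simps)
  show ?thesis unfolding 1 2 3 4 5 unfolding Aff_E r_def c_def by (rule refl)
qed

lemma Aff_id: assumes "n > 0" "i < n^2" shows "Aff n 1 0 0 1 0 0 i = i"
proof -
  have "i div n < n" using assms by (simp add: div_less_iff_less_mult power2_eq_square)
  then show ?thesis unfolding Aff_def E_def using assms
    by (simp add: zmod_int[symmetric] del: of_nat_mod)
qed

lemma pi1_Aff: assumes "n > 0" "i < n^2" shows "pi1 n i = Aff n 1 0 0 1 0 1 i"
proof -
  have "i div n < n" using assms by (simp add: div_less_iff_less_mult power2_eq_square)
  moreover have "(int (i mod n) + 1) mod int n = int (Suc (i mod n) mod n)" by (simp add: of_nat_mod add.commute)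
  moreover have "int (i div n) mod int n = int (i div n)" using calculation by simp
  moreover have "int (i mod n) mod int n = int (i mod n)" by (simp add: of_nat_mod[symmetric])
  ultimately show ?thesis unfolding Aff_def E_def pi1_def using assms by simp
qed

lemma pi2_Aff: assumes "n > 0" "i < n^2" shows "pi2 n i = Aff n 1 0 0 1 1 0 i"
proof -
  have "i div n < n" using assms by (simp add: div_less_iff_less_mult power2_eq_square)
  moreover have "(int (i div n) + 1) mod int n = int (Suc (i div n) mod n)" by (simp add: of_nat_mod add.commute)
  moreover have "int (i mod n) mod int n = int (i mod n)" by (simp add: of_nat_mod[symmetric])
  ultimately show ?thesis unfolding Aff_def E_def pi2_def using assms by simp
qed

lemma id_Aff: assumes "n > 0" "i < n^2" shows "id i = Aff n 1 0 0 1 0 0 i"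
  using Aff_id[OF assms] by simp

lemma Aff_bij:
  assumes "n > 0"
    and "\<And>i. i < n^2 \<Longrightarrow> Aff n ca cb cc cd da db (Aff n a1 a2 a3 a4 b1 b2 i) = i"
    and "\<And>i. i < n^2 \<Longrightarrow> Aff n a1 a2 a3 a4 b1 b2 (Aff n ca cb cc cd da db i) = i"
  shows "bij_betw (Aff n a1 a2 a3 a4 b1 b2) {..<n^2} {..<n^2}"
  by (rule bij_betw_byWitness[where f'="Aff n ca cb cc cd da db"]) (auto simp: assms Aff_lt)




lemma Zgen:
  fixes psi :: "'a::finite \<times> 'b::finite \<times> 'c::finite \<Rightarrow> complex"
  assumes n: "n > 0"
    and tb: "\<And>i. i < n^2 \<Longrightarrow> Aff n la lb lc ld 0 0 (Aff n ma mb mc md 0 0 i) = i"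
        "\<And>i. i < n^2 \<Longrightarrow> Aff n ma mb mc md 0 0 (Aff n la lb lc ld 0 0 i) = i"
    and sb: "\<And>i. i < n^2 \<Longrightarrow> Aff n la lb lc ld xa xb (Aff n ma mb mc md aa ab i) = i"
        "\<And>i. i < n^2 \<Longrightarrow> Aff n ma mb mc md aa ab (Aff n la lb lc ld xa xb i) = i"
    and qA: "\<And>i. i < n^2 \<Longrightarrow> qA i = Aff n la lb lc ld 0 0 (Aff n 1 0 0 1 uA1 uA2 (Aff n ma mb mc md aa ab i))"
    and qB: "\<And>i. i < n^2 \<Longrightarrow> qB i = Aff n la lb lc ld 0 0 (Aff n 1 0 0 1 uB1 uB2 (Aff n ma mb mc md aa ab i))"
    and qC: "\<And>i. i < n^2 \<Longrightarrow> qC i = Aff n la lb lc ld 0 0 (Aff n 1 0 0 1 uC1 uC2 (Aff n ma mb mc md aa ab i))"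
  shows "perm_expect (n^2) psi qA qB qC = perm_expect (n^2) psi (Aff n 1 0 0 1 uA1 uA2) (Aff n 1 0 0 1 uB1 uB2) (Aff n 1 0 0 1 uC1 uC2)"
proof (rule perm_conj_general[where t="Aff n la lb lc ld 0 0" and s="Aff n ma mb mc md aa ab"])
  show "bij_betw (Aff n la lb lc ld 0 0) {..<n^2} {..<n^2}" by (rule Aff_bij[OF n tb(2) tb(1)])
  show "bij_betw (Aff n ma mb mc md aa ab) {..<n^2} {..<n^2}" by (rule Aff_bij[OF n sb(1) sb(2)])
  show "\<And>k. k < n^2 \<Longrightarrow> Aff n 1 0 0 1 uA1 uA2 k < n^2" by (rule Aff_lt[OF n])
  show "\<And>k. k < n^2 \<Longrightarrow> Aff n 1 0 0 1 uB1 uB2 k < n^2" by (rule Aff_lt[OF n])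
  show "\<And>k. k < n^2 \<Longrightarrow> Aff n 1 0 0 1 uC1 uC2 k < n^2" by (rule Aff_lt[OF n])
qed (fact qA qB qC)+

theorem mainTheorem10:
  fixes psi :: "'a::finite \<times> 'b::finite \<times> 'c::finite \<Rightarrow> complex" and n :: nat
  assumes "pure_state psi" and "n \<ge> 2"
  shows "Z_ABC n psi \<in> \<real> \<and> cmod (Z_ABC n psi) \<le> 1 \<and>
         Z_BAC n psi = Z_ABC n psi \<and> Z_ACB n psi = Z_ABC n psi \<and>
         Z_CAB n psi = Z_ABC n psi \<and> Z_BCA n psi = Z_ABC n psi \<and>
         Z_CBA n psi = Z_ABC n psi"
proof -
  have n: "n > 0" using assms(2) by simp
  note ac = Aff_comp[OF n] Aff_id[OF n]
  have c1: "\<And>i. i < n^2 \<Longrightarrow> pi1 n i = Aff n 1 0 0 1 0 1 i" by (rule pi1_Aff[OF n])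
  have c2: "\<And>i. i < n^2 \<Longrightarrow> pi2 n i = Aff n 1 0 0 1 1 0 i" by (rule pi2_Aff[OF n])
  have c0: "\<And>i. i < n^2 \<Longrightarrow> id i = Aff n 1 0 0 1 0 0 i" by (rule id_Aff[OF n])
  define Z where "Z = perm_expect (n^2) psi (Aff n 1 0 0 1 0 1) (Aff n 1 0 0 1 1 0) (Aff n 1 0 0 1 0 0)"
  have ABC: "Z_ABC n psi = Z" unfolding Z_ABC_def Z_def by (rule perm_cong) (simp_all add: c1 c2 Aff_id[OF n])
  have BAC: "Z_BAC n psi = Z" unfolding Z_BAC_def Z_def
    by (rule Zgen[where la=0 and lb=1 and lc=1 and ld=0 and ma=0 and mb=1 and mc=1 and md=0 and aa=0 and ab=0 and xa=0 and xb=0])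
       (simp_all add: n ac c1 c2 Aff_lt)
  have ACB: "Z_ACB n psi = Z" unfolding Z_ACB_def Z_def
    by (rule Zgen[where la="-1" and lb="-1" and lc=0 and ld=1 and ma="-1" and mb="-1" and mc=0 and md=1 and aa="-1" and ab=0 and xa="-1" and xb=0])
       (simp_all add: n ac c1 c2 Aff_lt)
  have CAB: "Z_CAB n psi = Z" unfolding Z_CAB_def Z_def
    by (rule Zgen[where la=0 and lb=1 and lc="-1" and ld="-1" and ma="-1" and mb="-1" and mc=1 and md=0 and aa="-1" and ab=0 and xa=0 and xb="-1"])
       (simp_all add: n ac c1 c2 Aff_lt)
  have BCA: "Z_BCA n psi = Z" unfolding Z_BCA_def Z_def
    by (rule Zgen[where la="-1" and lb="-1" and lc=1 and ld=0 and ma=0 and mb=1 and mc="-1" and md="-1" and aa=0 and ab="-1" and xa="-1" and xb=0])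
       (simp_all add: n ac c1 c2 Aff_lt)
  have CBA: "Z_CBA n psi = Z" unfolding Z_CBA_def Z_def
    by (rule Zgen[where la=1 and lb=0 and lc="-1" and ld="-1" and ma=1 and mb=0 and mc="-1" and md="-1" and aa=0 and ab="-1" and xa=0 and xb="-1"])
       (simp_all add: n ac c1 c2 Aff_lt)
  have inv: "perm_expect (n^2) psi (Aff n 1 0 0 1 0 (-1)) (Aff n 1 0 0 1 (-1) 0) (Aff n 1 0 0 1 0 0) = Z"
    unfolding Z_def
    by (rule Zgen[where la="-1" and lb=0 and lc=0 and ld="-1" and ma="-1" and mb=0 and mc=0 and md="-1" and aa=0 and ab=0 and xa=0 and xb=0])
       (simp_all add: n ac)
  have bij: "bij_betw (Aff n 1 0 0 1 b1 b2) {..<n^2} {..<n^2}" for b1 b2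
    by (rule Aff_bij[where ca=1 and cb=0 and cc=0 and cd=1 and da="-b1" and db="-b2", OF n]) (simp_all add: ac)
  have i1: "\<And>k. k < n^2 \<Longrightarrow> Aff n 1 0 0 1 0 (- 1) (Aff n 1 0 0 1 0 1 k) = k"
    by (simp add: Aff_comp[OF n] Aff_id[OF n])
  have i2: "\<And>k. k < n^2 \<Longrightarrow> Aff n 1 0 0 1 (- 1) 0 (Aff n 1 0 0 1 1 0 k) = k"
    by (simp add: Aff_comp[OF n] Aff_id[OF n])
  have i3: "\<And>k. k < n^2 \<Longrightarrow> Aff n 1 0 0 1 0 0 (Aff n 1 0 0 1 0 0 k) = k"
    by (simp add: Aff_comp[OF n] Aff_id[OF n])
  have adj: "perm_expect (n^2) psi (Aff n 1 0 0 1 0 (-1)) (Aff n 1 0 0 1 (-1) 0) (Aff n 1 0 0 1 0 0) = cnj Z"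
    unfolding Z_def by (rule perm_adj[OF bij bij bij Aff_lt[OF n] Aff_lt[OF n] Aff_lt[OF n] i1 i2 i3])
  have real: "Z \<in> \<real>" using inv adj by (metis Reals_cnj_iff)
  have bound: "cmod Z \<le> 1" unfolding Z_def by (rule perm_bound[OF assms(1) bij bij bij])
  show ?thesis using ABC BAC ACB CAB BCA CBA real bound by simp
qed


end
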